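(* Let $X_n,Y_n,X,Y$ ($n=1,2,\dots$) be mm-spaces and $F_n,F\in\mathcal F^2$ with $F_n\to F$ pointwise and such that for every $s,t\ge0$, $\lim_{n\to\infty}\big(F_n(s,t)-\inf_{s\le s',t\le t'}F_n(s',t')\big)=0$. Let $p_n\colon X_n\to X$ and $q_n\colon Y_n\to Y$ be Borel maps such that $p_n$ is 1-Lipschitz up to $\varepsilon_n$, $q_n$ is 1-Lipschitz up to $\delta_n$, $\pi((p_n)_*m_{X_n},m_X)\le\varepsilon_n$ and $\pi((q_n)_*m_{Y_n},m_Y)\le\delta_n$, where $\varepsilon_n,\delta_n\to0$. Then there is a sequence $\eta_n\to0$ such that $p_n\times q_n\colon X_n\times_{F_n}Y_n\to X\times_FY$, $(x,y)\mapsto(p_n(x),q_n(y))$, is 1-Lipschitz up to $\eta_n$.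
   Context: An mm-space is a triple $(X,d_X,m_X)$ with $(X,d_X)$ complete separable metric space and $m_X$ a Borel probability measure. $\mathcal F^2$: continuous $F\colon[0,+\infty)^2\to[0,+\infty)$ such that $d_F((x,y),(x',y')):=F(d_X(x,x'),d_Y(y,y'))$ is a metric on $X\times Y$ for all metric spaces; $X\times_FY:=(X\times Y,d_F,m_X\otimes m_Y)$. A map $f\colon X\to Y$ from an mm-space to a metric space is 1-Lipschitz up to (an additive error) $\varepsilon\ge0$ if there is a Borel $X_0\subset X$ with $m_X(X_0)\ge1-\varepsilon$ and $d_Y(f(x),f(x'))\le d_X(x,x')+\varepsilon$ for all $x,x'\in X_0$. $\pi$ is the Prokhorov distance: $\pi(\mu,\nu)$ is the infimum of $\varepsilon>0$ with $\mu(U_\varepsilon(A))\ge\nu(A)-\varepsilon$ for all Borel $A$, where $U_\varepsilon(A)=\{x:d(x,A)<\varepsilon\}$. *)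

theory Defs
  imports "HOL-Probability.Probability"
begin

definition metric_borel_sets :: "'a set \<Rightarrow> ('a \<Rightarrow> 'a \<Rightarrow> real) \<Rightarrow> 'a set set" where
  "metric_borel_sets X d = sigma_sets X {U. openin (Metric_space.mtopology X d) U}"

definition mm_space :: "'a set \<Rightarrow> ('a \<Rightarrow> 'a \<Rightarrow> real) \<Rightarrow> 'a measure \<Rightarrow> bool" where
  "mm_space X d m \<longleftrightarrow> Metric_space X d \<and> Metric_space.mcomplete X d
     \<and> separable_space (Metric_space.mtopology X d)
     \<and> space m = X \<and> sets m = metric_borel_sets X d \<and> prob_space m"

definition prod_dist :: "(real \<Rightarrow> real \<Rightarrow> real) \<Rightarrow> ('a \<Rightarrow> 'a \<Rightarrow> real) \<Rightarrow> ('b \<Rightarrow> 'b \<Rightarrow> real)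
    \<Rightarrow> ('a \<times> 'b) \<Rightarrow> ('a \<times> 'b) \<Rightarrow> real" where
  "prod_dist F dX dY = (\<lambda>(x, y) (x', y'). F (dX x x') (dY y y'))"

text \<open>The class F^2. The metric condition quantifies over all metric spaces carried by
  subsets of nat (the metric axioms involve at most three points, so this is
  the same as quantifying over all metric spaces).\<close>
definition F2 :: "(real \<Rightarrow> real \<Rightarrow> real) \<Rightarrow> bool" where
  "F2 F \<longleftrightarrow> continuous_on ({0..} \<times> {0..}) (\<lambda>(s, t). F s t)
     \<and> (\<forall>s\<ge>0. \<forall>t\<ge>0. 0 \<le> F s t)
     \<and> (\<forall>(X::nat set) dX (Y::nat set) dY. Metric_space X dX \<longrightarrow> Metric_space Y dY
          \<longrightarrow> Metric_space (X \<times> Y) (prod_dist F dX dY))"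

definition lip1_up_to :: "('a \<Rightarrow> 'a \<Rightarrow> real) \<Rightarrow> 'a measure \<Rightarrow> ('b \<Rightarrow> 'b \<Rightarrow> real)
    \<Rightarrow> ('a \<Rightarrow> 'b) \<Rightarrow> real \<Rightarrow> bool" where
  "lip1_up_to dX m dY f eps \<longleftrightarrow> 0 \<le> eps \<and> (\<exists>X0 \<in> sets m. measure m X0 \<ge> 1 - eps \<and>
     (\<forall>x\<in>X0. \<forall>x'\<in>X0. dY (f x) (f x') \<le> dX x x' + eps))"

definition open_nbhd :: "'a set \<Rightarrow> ('a \<Rightarrow> 'a \<Rightarrow> real) \<Rightarrow> real \<Rightarrow> 'a set \<Rightarrow> 'a set" where
  "open_nbhd X d eps A = {x \<in> X. \<exists>a\<in>A. d x a < eps}"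

definition prokhorov :: "'a set \<Rightarrow> ('a \<Rightarrow> 'a \<Rightarrow> real) \<Rightarrow> 'a measure \<Rightarrow> 'a measure \<Rightarrow> real" where
  "prokhorov X d \<mu> \<nu> = Inf {eps. eps > 0 \<and>
     (\<forall>A \<in> metric_borel_sets X d. measure \<mu> (open_nbhd X d eps A) \<ge> measure \<nu> A - eps)}"

end

theory Submission imports Defs begin



lemma F2_zero: assumes "F2 G" shows "G 0 0 = 0"
proof -
  have "Metric_space ({0::nat}) (\<lambda>_ _. 0)" by (unfold_locales) auto
  hence "Metric_space ({0::nat} \<times> {0::nat}) (prod_dist G (\<lambda>_ _. 0) (\<lambda>_ _. 0))"
    using assms unfolding F2_def by blast
  then show ?thesis using Metric_space.zero[of "{0::nat} \<times> {0::nat}" "prod_dist G (\<lambda>_ _. 0) (\<lambda>_ _. 0)" "(0,0)" "(0,0)"]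
    by (simp add: prod_dist_def)
qed

lemma F2_nonneg: "F2 G \<Longrightarrow> 0 \<le> s \<Longrightarrow> 0 \<le> t \<Longrightarrow> 0 \<le> G s t"
  unfolding F2_def by blast

lemma F2_tri_pos:
  assumes "F2 G" "0 \<le> g1" "g1 \<le> s" "0 \<le> g2" "g2 \<le> t" "e > 0"
  shows "G (s + 2*e) (t + 2*e) \<le> G (g1 + e) (g2 + e) + G (s - g1 + e) (t - g2 + e)"
proof -
  define c :: "nat \<Rightarrow> real" where "c = (\<lambda>i. if i = 0 then 0 else if i = 1 then g1 + e else s + 2*e)"
  define c' :: "nat \<Rightarrow> real" where "c' = (\<lambda>i. if i = 0 then 0 else if i = 1 then g2 + e else t + 2*e)"
  have inj: "inj_on c {0,1,2}" "inj_on c' {0,1,2}" using assms by (auto simp: inj_on_def c_def c'_def)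
  have ms: "Metric_space ({0,1,2}::nat set) (\<lambda>i j. \<bar>f i - f j\<bar>)" if "inj_on f {0,1,2}" for f :: "nat \<Rightarrow> real"
    using that by unfold_locales (auto simp: inj_on_def)
  have "Metric_space (({0,1,2}::nat set) \<times> ({0,1,2}::nat set)) (prod_dist G (\<lambda>i j. \<bar>c i - c j\<bar>) (\<lambda>i j. \<bar>c' i - c' j\<bar>))"
    using assms(1) ms[OF inj(1)] ms[OF inj(2)] unfolding F2_def by blast
  from Metric_space.triangle[OF this, of "(0,0)" "(1,1)" "(2,2)"]
  have T: "G (\<bar>c 0 - c 2\<bar>) (\<bar>c' 0 - c' 2\<bar>) \<le> G (\<bar>c 0 - c 1\<bar>) (\<bar>c' 0 - c' 1\<bar>) + G (\<bar>c 1 - c 2\<bar>) (\<bar>c' 1 - c' 2\<bar>)"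
    by (simp add: prod_dist_def)
  have v: "c 0 = 0" "c 1 = g1 + e" "c 2 = s + 2*e" "c' 0 = 0" "c' 1 = g2 + e" "c' 2 = t + 2*e"
    by (simp_all add: c_def c'_def)
  have a: "\<bar>c 0 - c 2\<bar> = s + 2*e" "\<bar>c' 0 - c' 2\<bar> = t + 2*e" "\<bar>c 0 - c 1\<bar> = g1 + e" "\<bar>c' 0 - c' 1\<bar> = g2 + e"
     "\<bar>c 1 - c 2\<bar> = s - g1 + e" "\<bar>c' 1 - c' 2\<bar> = t - g2 + e"
    unfolding v using assms by auto
  from T show ?thesis unfolding a .
qed

lemma F2_seq:
  assumes "F2 G" "a \<longlonglongrightarrow> a0" "b \<longlonglongrightarrow> b0" "\<And>k. a k \<ge> 0" "\<And>k. b k \<ge> 0" "a0 \<ge> 0" "b0 \<ge> 0"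
  shows "(\<lambda>k. G (a k) (b k)) \<longlonglongrightarrow> G a0 b0"
proof -
  have c: "continuous_on ({0..} \<times> {0..}) (\<lambda>(s, t). G s t)" using assms(1) by (simp add: F2_def)
  have "(\<lambda>k. (\<lambda>(s, t). G s t) (a k, b k)) \<longlonglongrightarrow> (\<lambda>(s, t). G s t) (a0, b0)"
    by (rule continuous_on_tendsto_compose[OF c]) (use assms in \<open>auto intro: tendsto_Pair\<close>)
  thus ?thesis by simp
qed

lemma F2_tri:
  assumes "F2 G" "0 \<le> g1" "g1 \<le> s" "0 \<le> g2" "g2 \<le> t"
  shows "G s t \<le> G g1 g2 + G (s - g1) (t - g2)"
proof -
  define e :: "nat \<Rightarrow> real" where "e = (\<lambda>k. 1 / (real k + 1))"
  have e0: "e \<longlonglongrightarrow> 0" unfolding e_def using LIMSEQ_inverse_real_of_nat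
    by (simp add: inverse_eq_divide add.commute)
  have ep: "\<And>k. e k > 0" by (simp add: e_def)
  have lim: "(\<lambda>k. x + c * e k) \<longlonglongrightarrow> x" for x c :: real
    using tendsto_add[OF tendsto_const[of x] tendsto_mult[OF tendsto_const[of c] e0]] by simp
  have nn: "0 \<le> x + c * e k" if "0 \<le> x" "0 \<le> c" for x c :: real and k
    using that ep[of k] by simp
  have l1: "(\<lambda>k. G (s + 2 * e k) (t + 2 * e k)) \<longlonglongrightarrow> G s t"
    by (rule F2_seq[OF assms(1) lim lim]) (use nn assms in auto)
  have l2a: "(\<lambda>k. G (g1 + 1 * e k) (g2 + 1 * e k)) \<longlonglongrightarrow> G g1 g2"
    by (rule F2_seq[OF assms(1) lim lim]) (use nn[of _ 1] assms in auto)
  have l2b: "(\<lambda>k. G ((s - g1) + 1 * e k) ((t - g2) + 1 * e k)) \<longlonglongrightarrow> G (s - g1) (t - g2)"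
    by (rule F2_seq[OF assms(1) lim lim]) (use nn[of _ 1] assms in auto)
  have l2: "(\<lambda>k. G (g1 + e k) (g2 + e k) + G (s - g1 + e k) (t - g2 + e k)) \<longlonglongrightarrow> G g1 g2 + G (s - g1) (t - g2)"
    using tendsto_add[OF l2a l2b] by simp
  show ?thesis
    by (rule LIMSEQ_le[OF l1 l2]) (use F2_tri_pos[OF assms ep] in blast)
qed




lemma grid:
  assumes "(\<rho>::real) > 0" "0 \<le> m" "m \<le> D"
  shows "\<exists>i\<le>nat \<lceil>D/\<rho>\<rceil>. real i * \<rho> \<le> m \<and> m < real i * \<rho> + \<rho>"
proof (intro exI conjI)
  let ?i = "nat \<lfloor>m/\<rho>\<rfloor>"
  have f0: "0 \<le> \<lfloor>m/\<rho>\<rfloor>" using assms by simp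
  have ri: "real ?i = of_int \<lfloor>m/\<rho>\<rfloor>" using f0 by simp
  have "of_int \<lfloor>m/\<rho>\<rfloor> \<le> m/\<rho>" by (rule of_int_floor_le)
  hence "of_int \<lfloor>m/\<rho>\<rfloor> * \<rho> \<le> m" by (metis assms(1) pos_le_divide_eq)
  thus "real ?i * \<rho> \<le> m" using ri by simp
  have "m/\<rho> < of_int \<lfloor>m/\<rho>\<rfloor> + 1" by (rule real_of_int_floor_add_one_gt)
  hence "m/\<rho> < real ?i + 1" using ri by simp
  thus "m < real ?i * \<rho> + \<rho>" using assms by (simp add: pos_divide_less_eq algebra_simps)
  have "m/\<rho> \<le> D/\<rho>" using assms by (simp add: divide_right_mono)
  hence "\<lfloor>m/\<rho>\<rfloor> \<le> \<lceil>D/\<rho>\<rceil>" by (meson floor_le_ceiling floor_mono order_trans)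
  thus "?i \<le> nat \<lceil>D/\<rho>\<rceil>" by simp
qed

lemma F2_small:
  assumes "F2 G" "c > 0"
  shows "\<exists>d>0. \<forall>h k. 0 \<le> h \<longrightarrow> 0 \<le> k \<longrightarrow> h < d \<longrightarrow> k < d \<longrightarrow> G h k < c"
proof -
  have cont: "continuous_on ({0..} \<times> {0..}) (\<lambda>(s, t). G s t)" using assms(1) by (simp add: F2_def)
  have "(0::real,0::real) \<in> {0..} \<times> {0..}" by simp
  from cont[unfolded continuous_on_iff, rule_format, OF this assms(2)]
  obtain d where d: "d > 0" "\<And>x'. x' \<in> {0..} \<times> {0..} \<Longrightarrow> dist x' (0,0) < d \<Longrightarrow> dist ((\<lambda>(s, t). G s t) x') ((\<lambda>(s, t). G s t) (0,0)) < c"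
    by blast
  show ?thesis
  proof (intro exI[of _ "d/2"] conjI allI impI)
    show "d/2 > 0" using d by simp
    fix h k :: real assume hk: "0 \<le> h" "0 \<le> k" "h < d/2" "k < d/2"
    have "dist (h,k) (0,0) = sqrt (h\<^sup>2 + k\<^sup>2)" by (simp add: dist_Pair_Pair dist_real_def)
    also have "\<dots> \<le> \<bar>h\<bar> + \<bar>k\<bar>" by (rule sqrt_sum_squares_le_sum_abs)
    also have "\<dots> < d" using hk by simp
    finally have "dist (G h k) (G 0 0) < c" using d(2)[of "(h,k)"] hk by simp
    thus "G h k < c" using F2_zero[OF assms(1)] F2_nonneg[OF assms(1) hk(1,2)] by (simp add: dist_real_def)
  qed
qed

lemma core:
  fixes Fn :: "nat \<Rightarrow> real \<Rightarrow> real \<Rightarrow> real" and F :: "real \<Rightarrow> real \<Rightarrow> real"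
  assumes F2F: "F2 F" and F2n: "\<And>n. F2 (Fn n)"
   and conv: "\<And>s t. 0 \<le> s \<Longrightarrow> 0 \<le> t \<Longrightarrow> (\<lambda>n. Fn n s t) \<longlonglongrightarrow> F s t"
   and mono: "\<And>s t. 0 \<le> s \<Longrightarrow> 0 \<le> t \<Longrightarrow>
        (\<lambda>n. Fn n s t - Inf {Fn n s' t' | s' t'. s \<le> s' \<and> t \<le> t'}) \<longlonglongrightarrow> 0"
   and el: "\<epsilon> \<longlonglongrightarrow> 0" and dl: "\<delta> \<longlonglongrightarrow> 0" and g: "\<gamma> > 0"
  shows "eventually (\<lambda>n. \<forall>s t a b. 0 \<le> s \<longrightarrow> s \<le> D \<longrightarrow> 0 \<le> t \<longrightarrow> t \<le> D \<longrightarrow> 0 \<le> a \<longrightarrow> 0 \<le> b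
     \<longrightarrow> s \<le> a + \<epsilon> n \<longrightarrow> t \<le> b + \<delta> n \<longrightarrow> 0 \<le> \<epsilon> n \<longrightarrow> 0 \<le> \<delta> n \<longrightarrow> F s t \<le> Fn n a b + \<gamma>) sequentially"
proof -
  obtain d where d: "d > 0" "\<And>h k. 0 \<le> h \<Longrightarrow> 0 \<le> k \<Longrightarrow> h < d \<Longrightarrow> k < d \<Longrightarrow> F h k < \<gamma>/3"
    using F2_small[OF F2F, of "\<gamma>/3"] g by auto
  define \<rho> where "\<rho> = d/2"
  have \<rho>: "\<rho> > 0" using d by (simp add: \<rho>_def)
  define N where "N = nat \<lceil>D/\<rho>\<rceil>"
  define Gr where "Gr = (\<lambda>(i,j). (real i * \<rho>, real j * \<rho>)) ` ({..N} \<times> {..N})"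
  have finGr: "finite Gr" by (simp add: Gr_def)
  have Gr0: "\<And>g. g \<in> Gr \<Longrightarrow> 0 \<le> fst g \<and> 0 \<le> snd g" using \<rho> by (auto simp: Gr_def)
  have E1: "eventually (\<lambda>n. \<forall>g\<in>Gr. F (fst g) (snd g) < Fn n (fst g) (snd g) + \<gamma>/3) sequentially"
  proof (rule eventually_ball_finite[OF finGr], rule ballI)
    fix g assume gin: "g \<in> Gr"
    have g3: "\<gamma>/3 > 0" using g by simp
    from tendstoD[OF conv[OF conjunct1[OF Gr0[OF gin]] conjunct2[OF Gr0[OF gin]]]  g3]
    show "eventually (\<lambda>n. F (fst g) (snd g) < Fn n (fst g) (snd g) + \<gamma>/3) sequentially"
      by (elim eventually_mono) (unfold dist_real_def, arith)
  qed
  have E2: "eventually (\<lambda>n. \<forall>g\<in>Gr. Fn n (fst g) (snd g) - Inf {Fn n s' t' | s' t'. fst g \<le> s' \<and> snd g \<le> t'} < \<gamma>/3) sequentially"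
  proof (rule eventually_ball_finite[OF finGr], rule ballI)
    fix g assume gin: "g \<in> Gr"
    have g3: "\<gamma>/3 > 0" using g by simp
    from tendstoD[OF mono[OF conjunct1[OF Gr0[OF gin]] conjunct2[OF Gr0[OF gin]]]  g3]
    show "eventually (\<lambda>n. Fn n (fst g) (snd g) - Inf {Fn n s' t' | s' t'. fst g \<le> s' \<and> snd g \<le> t'} < \<gamma>/3) sequentially"
      by (elim eventually_mono) (unfold dist_real_def, arith)
  qed
  have E3: "eventually (\<lambda>n. \<epsilon> n < \<rho> \<and> \<delta> n < \<rho>) sequentially"
    using order_tendstoD(2)[OF el \<rho>] order_tendstoD(2)[OF dl \<rho>] by (rule eventually_conj)
  show ?thesis
  proof (rule eventually_mono[OF eventually_conj[OF E1 eventually_conj[OF E2 E3]]], intro allI impI)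
    fix n s t a b
    assume H: "(\<forall>g\<in>Gr. F (fst g) (snd g) < Fn n (fst g) (snd g) + \<gamma>/3) \<and>
      (\<forall>g\<in>Gr. Fn n (fst g) (snd g) - Inf {Fn n s' t' | s' t'. fst g \<le> s' \<and> snd g \<le> t'} < \<gamma>/3) \<and>
      \<epsilon> n < \<rho> \<and> \<delta> n < \<rho>"
      and st: "0 \<le> s" "s \<le> D" "0 \<le> t" "t \<le> D" "0 \<le> a" "0 \<le> b" "s \<le> a + \<epsilon> n" "t \<le> b + \<delta> n"
        "0 \<le> \<epsilon> n" "0 \<le> \<delta> n"
    define m1 where "m1 = max (s - \<epsilon> n) 0"
    define m2 where "m2 = max (t - \<delta> n) 0"
    have m: "0 \<le> m1" "m1 \<le> D" "0 \<le> m2" "m2 \<le> D" using st by (auto simp: m1_def m2_def)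
    obtain i where i: "i \<le> N" "real i * \<rho> \<le> m1" "m1 < real i * \<rho> + \<rho>"
      using grid[OF \<rho> m(1,2)] unfolding N_def by blast
    obtain j where j: "j \<le> N" "real j * \<rho> \<le> m2" "m2 < real j * \<rho> + \<rho>"
      using grid[OF \<rho> m(3,4)] unfolding N_def by blast
    define g1 where "g1 = real i * \<rho>"
    define g2 where "g2 = real j * \<rho>"
    have gG: "(g1, g2) \<in> Gr" using i(1) j(1) by (auto simp: Gr_def g1_def g2_def)
    have g0: "0 \<le> g1" "0 \<le> g2" using \<rho> by (auto simp: g1_def g2_def)
    have gs: "g1 \<le> s" "g2 \<le> t" "g1 \<le> a" "g2 \<le> b" using i j st by (auto simp: g1_def g2_def m1_def m2_def)
    have sm: "s - g1 < d" "t - g2 < d" using i j st H by (auto simp: g1_def g2_def m1_def m2_def \<rho>_def)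
    have 1: "F s t \<le> F g1 g2 + F (s - g1) (t - g2)" by (rule F2_tri[OF F2F g0(1) gs(1) g0(2) gs(2)])
    have 2: "F (s - g1) (t - g2) < \<gamma>/3" using d(2) sm gs by simp
    have 3: "F g1 g2 < Fn n g1 g2 + \<gamma>/3" using H gG by fastforce
    have 4: "Fn n g1 g2 - Inf {Fn n s' t' | s' t'. g1 \<le> s' \<and> g2 \<le> t'} < \<gamma>/3" using H gG by fastforce
    have 5: "Inf {Fn n s' t' | s' t'. g1 \<le> s' \<and> g2 \<le> t'} \<le> Fn n a b"
    proof (rule cInf_lower)
      show "Fn n a b \<in> {Fn n s' t' | s' t'. g1 \<le> s' \<and> g2 \<le> t'}" using gs by blast
      show "bdd_below {Fn n s' t' | s' t'. g1 \<le> s' \<and> g2 \<le> t'}"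
        by (rule bdd_belowI[of _ 0]) (use g0 F2_nonneg[OF F2n] in force)
    qed
    show "F s t \<le> Fn n a b + \<gamma>" using 1 2 3 4 5 by linarith
  qed
qed




lemma open_nbhd_borel:
  assumes "Metric_space X d" "A \<subseteq> X"
  shows "open_nbhd X d e A \<in> metric_borel_sets X d"
proof -
  have eq: "open_nbhd X d e A = \<Union> ((\<lambda>a. Metric_space.mball X d a e) ` A)"
    using assms Metric_space.commute[OF assms(1)]
    by (auto simp: open_nbhd_def Metric_space.mball_def[OF assms(1)])
  have "openin (Metric_space.mtopology X d) (open_nbhd X d e A)"
    unfolding eq by (intro openin_Union) (use Metric_space.openin_mball[OF assms(1)] in auto)
  thus ?thesis unfolding metric_borel_sets_def by (intro sigma_sets.Basic) simp
qed

lemma mball_borel: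
  assumes "Metric_space X d"
  shows "Metric_space.mball X d x r \<in> metric_borel_sets X d"
  unfolding metric_borel_sets_def by (intro sigma_sets.Basic) (simp add: Metric_space.openin_mball[OF assms])

lemma mball_large:
  assumes "mm_space X d m" "x0 \<in> X" "c > 0"
  shows "eventually (\<lambda>k::nat. measure m (Metric_space.mball X d x0 (real k)) > 1 - c) sequentially"
proof -
  have ms: "Metric_space X d" and sp: "space m = X" and se: "sets m = metric_borel_sets X d"
    and ps: "prob_space m" using assms(1) by (auto simp: mm_space_def)
  interpret prob_space m by fact
  let ?A = "\<lambda>k::nat. Metric_space.mball X d x0 (real k)"
  have inc: "incseq ?A" by (auto simp: incseq_def Metric_space.mball_def[OF ms])
  have rng: "range ?A \<subseteq> sets m" using mball_borel[OF ms] se by auto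
  have un: "(\<Union>k. ?A k) = X"
  proof
    show "(\<Union>k. ?A k) \<subseteq> X" by (auto simp: Metric_space.mball_def[OF ms])
    show "X \<subseteq> (\<Union>k. ?A k)"
    proof
      fix y assume y: "y \<in> X"
      obtain k where "d x0 y < real k" using reals_Archimedean2 by blast
      thus "y \<in> (\<Union>k. ?A k)" using y assms(2) by (auto simp: Metric_space.mball_def[OF ms])
    qed
  qed
  have "(\<lambda>k. measure m (?A k)) \<longlonglongrightarrow> measure m (\<Union>k. ?A k)"
    by (rule finite_Lim_measure_incseq[OF rng inc])
  hence "(\<lambda>k. measure m (?A k)) \<longlonglongrightarrow> 1" using un sp prob_space by simp
  from order_tendstoD(1)[OF this] show ?thesis using assms(3) by simp
qed

lemma prok_use:
  assumes "mm_space X d m" "prob_space M" "f \<in> measurable M m" "prokhorov X d (distr M m f) m \<le> e"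
    "\<theta> > 0" "A \<in> metric_borel_sets X d"
  shows "\<exists>x. 0 < x \<and> x < e + \<theta> \<and> measure (distr M m f) (open_nbhd X d x A) \<ge> measure m A - x"
proof -
  have ps: "prob_space m" using assms(1) by (auto simp: mm_space_def)
  let ?S = "{eps. eps > 0 \<and> (\<forall>A \<in> metric_borel_sets X d. measure (distr M m f) (open_nbhd X d eps A) \<ge> measure m A - eps)}"
  have "2 \<in> ?S" using prob_space.prob_le_1[OF ps] measure_nonneg
    by (smt (verit) mem_Collect_eq)
  hence ne: "?S \<noteq> {}" by blast
  have "Inf ?S < e + \<theta>" using assms(4,5) unfolding prokhorov_def by simp
  from cInf_lessD[OF ne this] obtain x where "x \<in> ?S" "x < e + \<theta>" by blast
  thus ?thesis using assms(6) by blast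
qed

lemma measure_int_ge:
  assumes "prob_space M" "A \<in> sets M" "B \<in> sets M"
  shows "measure M (A \<inter> B) \<ge> measure M A + measure M B - 1"
proof -
  interpret prob_space M by fact
  have "measure M (A \<union> B) = measure M A + measure M B - measure M (A \<inter> B)"
    using assms by (intro measure_Un3) (auto simp: fmeasurable_eq_sets)
  moreover have "measure M (A \<union> B) \<le> 1" by simp
  ultimately show ?thesis by linarith
qed

lemma measure_times_prob:
  assumes "prob_space M" "prob_space N" "A \<in> sets M" "B \<in> sets N"
  shows "measure (M \<Otimes>\<^sub>M N) (A \<times> B) = measure M A * measure N B"
proof -
  interpret sigma_finite_measure N using prob_space_imp_sigma_finite[OF assms(2)] .
  have "emeasure (M \<Otimes>\<^sub>M N) (A \<times> B) = emeasure M A * emeasure N B"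
    using assms by (intro emeasure_pair_measure_Times)
  thus ?thesis by (simp add: measure_def enn2real_mult)
qed




theorem mainTheorem18:
  fixes Xn :: "nat \<Rightarrow> 'a set" and dXn :: "nat \<Rightarrow> 'a \<Rightarrow> 'a \<Rightarrow> real" and mXn :: "nat \<Rightarrow> 'a measure"
    and Yn :: "nat \<Rightarrow> 'b set" and dYn :: "nat \<Rightarrow> 'b \<Rightarrow> 'b \<Rightarrow> real" and mYn :: "nat \<Rightarrow> 'b measure"
    and X :: "'c set" and dX :: "'c \<Rightarrow> 'c \<Rightarrow> real" and mX :: "'c measure"
    and Y :: "'d set" and dY :: "'d \<Rightarrow> 'd \<Rightarrow> real" and mY :: "'d measure"
    and Fn :: "nat \<Rightarrow> real \<Rightarrow> real \<Rightarrow> real" and F :: "real \<Rightarrow> real \<Rightarrow> real"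
    and p :: "nat \<Rightarrow> 'a \<Rightarrow> 'c" and q :: "nat \<Rightarrow> 'b \<Rightarrow> 'd"
    and \<epsilon> \<delta> :: "nat \<Rightarrow> real"
  assumes mmXn: "\<And>n. mm_space (Xn n) (dXn n) (mXn n)"
    and mmYn: "\<And>n. mm_space (Yn n) (dYn n) (mYn n)"
    and mmX: "mm_space X dX mX" and mmY: "mm_space Y dY mY"
    and F2n: "\<And>n. F2 (Fn n)" and F2F: "F2 F"
    and Fn_conv: "\<And>s t. 0 \<le> s \<Longrightarrow> 0 \<le> t \<Longrightarrow> (\<lambda>n. Fn n s t) \<longlonglongrightarrow> F s t"
    and Fn_mono: "\<And>s t. 0 \<le> s \<Longrightarrow> 0 \<le> t \<Longrightarrow>
        (\<lambda>n. Fn n s t - Inf {Fn n s' t' | s' t'. s \<le> s' \<and> t \<le> t'}) \<longlonglongrightarrow> 0"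
    and p_meas: "\<And>n. p n \<in> measurable (mXn n) mX"
    and q_meas: "\<And>n. q n \<in> measurable (mYn n) mY"
    and p_lip: "\<And>n. lip1_up_to (dXn n) (mXn n) dX (p n) (\<epsilon> n)"
    and q_lip: "\<And>n. lip1_up_to (dYn n) (mYn n) dY (q n) (\<delta> n)"
    and p_prok: "\<And>n. prokhorov X dX (distr (mXn n) mX (p n)) mX \<le> \<epsilon> n"
    and q_prok: "\<And>n. prokhorov Y dY (distr (mYn n) mY (q n)) mY \<le> \<delta> n"
    and \<epsilon>_lim: "\<epsilon> \<longlonglongrightarrow> 0" and \<delta>_lim: "\<delta> \<longlonglongrightarrow> 0"
  shows "\<exists>\<eta> :: nat \<Rightarrow> real. \<eta> \<longlonglongrightarrow> 0 \<and>
    (\<forall>n. lip1_up_to (prod_dist (Fn n) (dXn n) (dYn n)) (mXn n \<Otimes>\<^sub>M mYn n)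
          (prod_dist F dX dY) (\<lambda>(x, y). (p n x, q n y)) (\<eta> n))"
proof -
  define good where "good n e = lip1_up_to (prod_dist (Fn n) (dXn n) (dYn n)) (mXn n \<Otimes>\<^sub>M mYn n)
          (prod_dist F dX dY) (\<lambda>(x, y). (p n x, q n y)) e" for n e
  have mono_good: "good n e'" if "good n e" "e \<le> e'" for n e e'
    using that unfolding good_def lip1_up_to_def by (smt (verit))
  have good1: "good n 1" for n
    unfolding good_def lip1_up_to_def by (intro conjI bexI[of _ "{}"]) auto
  have msX: "Metric_space X dX" and spX: "space mX = X" and seX: "sets mX = metric_borel_sets X dX"
    and psX: "prob_space mX" using mmX by (auto simp: mm_space_def)
  have msY: "Metric_space Y dY" and spY: "space mY = Y" and seY: "sets mY = metric_borel_sets Y dY"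
    and psY: "prob_space mY" using mmY by (auto simp: mm_space_def)
  have msXn: "Metric_space (Xn n) (dXn n)" and spXn: "space (mXn n) = Xn n" and psXn: "prob_space (mXn n)" for n
    using mmXn[of n] by (auto simp: mm_space_def)
  have msYn: "Metric_space (Yn n) (dYn n)" and spYn: "space (mYn n) = Yn n" and psYn: "prob_space (mYn n)" for n
    using mmYn[of n] by (auto simp: mm_space_def)
  obtain x0 where x0: "x0 \<in> X" using prob_space.not_empty[OF psX] spX by auto
  obtain y0 where y0: "y0 \<in> Y" using prob_space.not_empty[OF psY] spY by auto
  have ev: "eventually (\<lambda>n. good n \<gamma>) sequentially" if g: "0 < \<gamma>" "\<gamma> \<le> 1" for \<gamma>
  proof -
    have g8: "\<gamma>/8 > 0" using g by simp
    obtain k where kX: "measure mX (Metric_space.mball X dX x0 (real k)) > 1 - \<gamma>/8"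
      and kY: "measure mY (Metric_space.mball Y dY y0 (real k)) > 1 - \<gamma>/8"
      using eventually_happens'[OF _ eventually_conj[OF mball_large[OF mmX x0 g8] mball_large[OF mmY y0 g8]]]
      by auto
    define R where "R = real k"
    define D where "D = 2 * R + 2"
    note C = core[OF F2F F2n Fn_conv Fn_mono \<epsilon>_lim \<delta>_lim g(1), of D]
    have E: "eventually (\<lambda>n. \<epsilon> n < \<gamma>/8 \<and> \<delta> n < \<gamma>/8) sequentially"
      using order_tendstoD(2)[OF \<epsilon>_lim g8] order_tendstoD(2)[OF \<delta>_lim g8] by (rule eventually_conj)
    show ?thesis
    proof (rule eventually_mono[OF eventually_conj[OF C E]])
      fix n
      assume H: "(\<forall>s t a b. 0 \<le> s \<longrightarrow> s \<le> D \<longrightarrow> 0 \<le> t \<longrightarrow> t \<le> D \<longrightarrow> 0 \<le> a \<longrightarrow> 0 \<le> b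
           \<longrightarrow> s \<le> a + \<epsilon> n \<longrightarrow> t \<le> b + \<delta> n \<longrightarrow> 0 \<le> \<epsilon> n \<longrightarrow> 0 \<le> \<delta> n \<longrightarrow> F s t \<le> Fn n a b + \<gamma>) \<and>
         (\<epsilon> n < \<gamma>/8 \<and> \<delta> n < \<gamma>/8)"
      from p_lip[of n] obtain X0 where e0: "0 \<le> \<epsilon> n" and X0: "X0 \<in> sets (mXn n)" "measure (mXn n) X0 \<ge> 1 - \<epsilon> n"
        "\<And>x x'. x \<in> X0 \<Longrightarrow> x' \<in> X0 \<Longrightarrow> dX (p n x) (p n x') \<le> dXn n x x' + \<epsilon> n"
        unfolding lip1_up_to_def by blast
      from q_lip[of n] obtain Y0 where d0: "0 \<le> \<delta> n" and Y0: "Y0 \<in> sets (mYn n)" "measure (mYn n) Y0 \<ge> 1 - \<delta> n"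
        "\<And>y y'. y \<in> Y0 \<Longrightarrow> y' \<in> Y0 \<Longrightarrow> dY (q n y) (q n y') \<le> dYn n y y' + \<delta> n"
        unfolding lip1_up_to_def by blast
      have ballX: "Metric_space.mball X dX x0 R \<in> metric_borel_sets X dX" by (rule mball_borel[OF msX])
      have ballY: "Metric_space.mball Y dY y0 R \<in> metric_borel_sets Y dY" by (rule mball_borel[OF msY])
      obtain x1 where x1: "0 < x1" "x1 < \<epsilon> n + \<gamma>/8"
        "measure (distr (mXn n) mX (p n)) (open_nbhd X dX x1 (Metric_space.mball X dX x0 R))
           \<ge> measure mX (Metric_space.mball X dX x0 R) - x1"
        using prok_use[OF mmX psXn p_meas p_prok g8 ballX] by blast
      obtain y1 where y1: "0 < y1" "y1 < \<delta> n + \<gamma>/8"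
        "measure (distr (mYn n) mY (q n)) (open_nbhd Y dY y1 (Metric_space.mball Y dY y0 R))
           \<ge> measure mY (Metric_space.mball Y dY y0 R) - y1"
        using prok_use[OF mmY psYn q_meas q_prok g8 ballY] by blast
      define B1 where "B1 = open_nbhd X dX x1 (Metric_space.mball X dX x0 R)"
      define B2 where "B2 = open_nbhd Y dY y1 (Metric_space.mball Y dY y0 R)"
      have B1s: "B1 \<in> sets mX" unfolding B1_def seX
        by (rule open_nbhd_borel[OF msX]) (auto simp: Metric_space.mball_def[OF msX])
      have B2s: "B2 \<in> sets mY" unfolding B2_def seY
        by (rule open_nbhd_borel[OF msY]) (auto simp: Metric_space.mball_def[OF msY])
      define P1 where "P1 = p n -` B1 \<inter> space (mXn n)"
      define P2 where "P2 = q n -` B2 \<inter> space (mYn n)"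
      have P1s: "P1 \<in> sets (mXn n)" unfolding P1_def by (rule measurable_sets[OF p_meas B1s])
      have P2s: "P2 \<in> sets (mYn n)" unfolding P2_def by (rule measurable_sets[OF q_meas B2s])
      have mP1: "measure (mXn n) P1 \<ge> 1 - \<gamma>/8 - x1"
        using x1(3) kX measure_distr[OF p_meas[of n] B1s] unfolding P1_def B1_def R_def by linarith
      have mP2: "measure (mYn n) P2 \<ge> 1 - \<gamma>/8 - y1"
        using y1(3) kY measure_distr[OF q_meas[of n] B2s] unfolding P2_def B2_def R_def by linarith
      define A1 where "A1 = X0 \<inter> P1"
      define A2 where "A2 = Y0 \<inter> P2"
      have A1s: "A1 \<in> sets (mXn n)" using X0(1) P1s by (simp add: A1_def)
      have A2s: "A2 \<in> sets (mYn n)" using Y0(1) P2s by (simp add: A2_def)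
      have mA1: "measure (mXn n) A1 \<ge> 1 - 2 * \<epsilon> n - \<gamma>/4"
        using measure_int_ge[OF psXn X0(1) P1s] X0(2) mP1 x1(2) unfolding A1_def by linarith
      have mA2: "measure (mYn n) A2 \<ge> 1 - 2 * \<delta> n - \<gamma>/4"
        using measure_int_ge[OF psYn Y0(1) P2s] Y0(2) mP2 y1(2) unfolding A2_def by linarith
      have le1: "measure (mXn n) A1 \<le> 1" "measure (mYn n) A2 \<le> 1"
        using prob_space.prob_le_1[OF psXn] prob_space.prob_le_1[OF psYn] by auto
      have prodm: "measure (mXn n \<Otimes>\<^sub>M mYn n) (A1 \<times> A2) = measure (mXn n) A1 * measure (mYn n) A2"
        by (rule measure_times_prob[OF psXn psYn A1s A2s])
      have "0 \<le> (1 - measure (mXn n) A1) * (1 - measure (mYn n) A2)"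
        using le1 by (intro mult_nonneg_nonneg) auto
      hence mZ: "measure (mXn n \<Otimes>\<^sub>M mYn n) (A1 \<times> A2) \<ge> 1 - \<gamma>"
        using prodm mA1 mA2 H by (simp add: algebra_simps)
      have bndX: "dX x0 (p n x) < R + 1" if "x \<in> P1" for x
      proof -
        from that obtain a where a: "p n x \<in> X" "a \<in> Metric_space.mball X dX x0 R" "dX (p n x) a < x1"
          unfolding P1_def B1_def open_nbhd_def by blast
        have aX: "a \<in> X" "dX x0 a < R" using a(2) by (auto simp: Metric_space.mball_def[OF msX])
        have "dX x0 (p n x) \<le> dX x0 a + dX a (p n x)" by (rule Metric_space.triangle[OF msX x0 aX(1) a(1)])
        thus ?thesis using aX a(3) Metric_space.commute[OF msX, of a "p n x"] x1(2) H g by linarith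
      qed
      have bndY: "dY y0 (q n y) < R + 1" if "y \<in> P2" for y
      proof -
        from that obtain a where a: "q n y \<in> Y" "a \<in> Metric_space.mball Y dY y0 R" "dY (q n y) a < y1"
          unfolding P2_def B2_def open_nbhd_def by blast
        have aY: "a \<in> Y" "dY y0 a < R" using a(2) by (auto simp: Metric_space.mball_def[OF msY])
        have "dY y0 (q n y) \<le> dY y0 a + dY a (q n y)" by (rule Metric_space.triangle[OF msY y0 aY(1) a(1)])
        thus ?thesis using aY a(3) Metric_space.commute[OF msY, of a "q n y"] y1(2) H g by linarith
      qed
      have inX: "p n x \<in> X" if "x \<in> P1" for x using that unfolding P1_def B1_def open_nbhd_def by blast
      have inY: "q n y \<in> Y" if "y \<in> P2" for y using that unfolding P2_def B2_def open_nbhd_def by blast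
      have DX: "dX (p n x) (p n x') \<le> D" if "x \<in> P1" "x' \<in> P1" for x x'
      proof -
        have "dX (p n x) (p n x') \<le> dX (p n x) x0 + dX x0 (p n x')"
          by (rule Metric_space.triangle[OF msX inX[OF that(1)] x0 inX[OF that(2)]])
        thus ?thesis using bndX[OF that(1)] bndX[OF that(2)] Metric_space.commute[OF msX, of x0 "p n x"]
          unfolding D_def by linarith
      qed
      have DY: "dY (q n y) (q n y') \<le> D" if "y \<in> P2" "y' \<in> P2" for y y'
      proof -
        have "dY (q n y) (q n y') \<le> dY (q n y) y0 + dY y0 (q n y')"
          by (rule Metric_space.triangle[OF msY inY[OF that(1)] y0 inY[OF that(2)]])
        thus ?thesis using bndY[OF that(1)] bndY[OF that(2)] Metric_space.commute[OF msY, of y0 "q n y"]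
          unfolding D_def by linarith
      qed
      show "good n \<gamma>"
        unfolding good_def lip1_up_to_def
      proof (intro conjI bexI[of _ "A1 \<times> A2"] ballI)
        show "0 \<le> \<gamma>" using g by simp
        show "A1 \<times> A2 \<in> sets (mXn n \<Otimes>\<^sub>M mYn n)" using A1s A2s by simp
        show "1 - \<gamma> \<le> measure (mXn n \<Otimes>\<^sub>M mYn n) (A1 \<times> A2)" by (rule mZ)
        fix z z' assume z: "z \<in> A1 \<times> A2" "z' \<in> A1 \<times> A2"
        obtain x y x' y' where zz: "z = (x, y)" "z' = (x', y')" by (cases z, cases z') auto
        have xs: "x \<in> X0" "x \<in> P1" "x' \<in> X0" "x' \<in> P1" "y \<in> Y0" "y \<in> P2" "y' \<in> Y0" "y' \<in> P2"
          using z zz by (auto simp: A1_def A2_def)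
        have "F (dX (p n x) (p n x')) (dY (q n y) (q n y')) \<le> Fn n (dXn n x x') (dYn n y y') + \<gamma>"
          using H[THEN conjunct1, rule_format, of "dX (p n x) (p n x')" "dY (q n y) (q n y')" "dXn n x x'" "dYn n y y'"]
            DX[OF xs(2,4)] DY[OF xs(6,8)] X0(3)[OF xs(1,3)] Y0(3)[OF xs(5,7)] e0 d0
            Metric_space.nonneg[OF msX] Metric_space.nonneg[OF msY]
            Metric_space.nonneg[OF msXn] Metric_space.nonneg[OF msYn]
          by blast
        thus "prod_dist F dX dY ((\<lambda>(x, y). (p n x, q n y)) z) ((\<lambda>(x, y). (p n x, q n y)) z')
            \<le> prod_dist (Fn n) (dXn n) (dYn n) z z' + \<gamma>"
          unfolding zz by (simp add: prod_dist_def)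
      qed
    qed
  qed
  define K where "K n = (GREATEST k. k \<le> n \<and> good n (1 / real (Suc k)))" for n
  have K: "K n \<le> n \<and> good n (1 / real (Suc (K n)))" for n
    unfolding K_def by (rule GreatestI_nat[of _ 0 n]) (use good1 in auto)
  have Kge: "m \<le> K n" if "m \<le> n" "good n (1 / real (Suc m))" for m n
    unfolding K_def by (rule Greatest_le_nat[of _ m n]) (use that in auto)
  define \<eta> where "\<eta> n = 1 / real (Suc (K n))" for n
  have evm: "eventually (\<lambda>n. \<eta> n \<le> 1 / real (Suc m)) sequentially" for m
  proof -
    have "eventually (\<lambda>n. good n (1 / real (Suc m))) sequentially" by (rule ev) auto
    then obtain N where N: "\<And>n. n \<ge> N \<Longrightarrow> good n (1 / real (Suc m))"
      unfolding eventually_sequentially by blast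
    show ?thesis unfolding eventually_sequentially
    proof (intro exI[of _ "max N m"] allI impI)
      fix n assume "max N m \<le> n"
      hence "m \<le> K n" using Kge N by auto
      thus "\<eta> n \<le> 1 / real (Suc m)" unfolding \<eta>_def by (simp add: frac_le)
    qed
  qed
  show ?thesis
  proof (intro exI[of _ \<eta>] conjI allI)
    show "lip1_up_to (prod_dist (Fn n) (dXn n) (dYn n)) (mXn n \<Otimes>\<^sub>M mYn n)
          (prod_dist F dX dY) (\<lambda>(x, y). (p n x, q n y)) (\<eta> n)" for n
      using K[of n] unfolding good_def \<eta>_def by blast
    show "\<eta> \<longlonglongrightarrow> 0"
    proof (rule order_tendstoI)
      fix a :: real assume "a < 0"
      thus "eventually (\<lambda>n. a < \<eta> n) sequentially" by (simp add: \<eta>_def less_le_trans[of a 0])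
    next
      fix a :: real assume "0 < a"
      then obtain m where m: "inverse (real (Suc m)) < a" using reals_Archimedean by blast
      show "eventually (\<lambda>n. \<eta> n < a) sequentially"
        using evm[of m] by (rule eventually_mono) (use m in \<open>simp add: inverse_eq_divide\<close>)
    qed
  qed
qed


end
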